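(* Let $N\ge1$, $\delta>0$, $0<s<1$ and let $G$ be an Orlicz function. Then there exists a constant $C>0$ such that \begin{equation*} \int_{\mathbb{R}^N}G(|u(x+h)-u(x)|)\,dx\le C\,|h|^s\,\Psi_{s,G,\delta}(u) \end{equation*} for all $u\in W^{s,G,\delta}(\mathbb{R}^N)$ and every $h\in\mathbb{R}^N$ with $0<|h|<\min\{\tfrac12,\delta\}$.
   Context: An Orlicz function is a function $G:[0,\infty)\to[0,\infty)$ that is continuous, convex, increasing, with $G(0)=0$, satisfies $G(2t)\le \mathfrak{c}\,G(t)$ for all $t\ge0$ for some $\mathfrak{c}>2$, and $\lim_{t\to0^+}G(t)/t=0$. $\Psi_{s,G,\delta}(u)=\int_{\mathbb{R}^N}\int_{B(x,\delta)}G\big(\frac{|u(x)-u(y)|}{|x-y|^s}\big)\frac{dy\,dx}{|x-y|^N}$; $L^G(\mathbb{R}^N)$ is the set of measurable $u$ with $\int_{\mathbb{R}^N}G(|u|)\,dx<\infty$, and $W^{s,G,\delta}(\mathbb{R}^N)=\{u\in L^G(\mathbb{R}^N):\Psi_{s,G,\delta}(u)<\infty\}$. *)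

theory Defs
  imports "HOL-Analysis.Analysis"
begin

definition orlicz :: "(real \<Rightarrow> real) \<Rightarrow> bool" where
  "orlicz G \<longleftrightarrow>
     (\<forall>t\<ge>0. G t \<ge> 0) \<and>
     continuous_on {0..} G \<and>
     convex_on {0..} G \<and>
     mono_on {0..} G \<and>
     G 0 = 0 \<and>
     (\<exists>c>2. \<forall>t\<ge>0. G (2 * t) \<le> c * G t) \<and>
     ((\<lambda>t. G t / t) \<longlongrightarrow> 0) (at_right 0)"

definition Psi :: "real \<Rightarrow> (real \<Rightarrow> real) \<Rightarrow> real \<Rightarrow> ('a::euclidean_space \<Rightarrow> real) \<Rightarrow> ennreal" where
  "Psi s G \<delta> u =
     (\<integral>\<^sup>+ x. (\<integral>\<^sup>+ y. indicator (ball x \<delta>) y *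
        ennreal (G (\<bar>u x - u y\<bar> / norm (x - y) powr s) / norm (x - y) ^ DIM('a)) \<partial>lebesgue) \<partial>lebesgue)"

definition LG :: "(real \<Rightarrow> real) \<Rightarrow> ('a::euclidean_space \<Rightarrow> real) set" where
  "LG G = {u. u \<in> borel_measurable lebesgue \<and> (\<integral>\<^sup>+ x. ennreal (G \<bar>u x\<bar>) \<partial>lebesgue) < \<infinity>}"

definition W_sGdelta :: "real \<Rightarrow> (real \<Rightarrow> real) \<Rightarrow> real \<Rightarrow> ('a::euclidean_space \<Rightarrow> real) set" where
  "W_sGdelta s G \<delta> = {u \<in> LG G. Psi s G \<delta> u < \<infinity>}"

end

theory Submission
  imports Defs
begin

lemma sf_lebesgue: "sigma_finite_measure (lebesgue :: 'a::euclidean_space measure)"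
proof -
  obtain A :: "'a set set" where A: "countable A" "A \<subseteq> sets lborel" "\<Union>A = space lborel" "\<forall>a\<in>A. emeasure lborel a \<noteq> \<infinity>"
    using lborel.sigma_finite_countable by blast
  show ?thesis
    apply (rule sigma_finite_measure.intro)
    apply (rule exI[of _ A])
    using A by (auto simp: emeasure_completion)
qed

lemma id_leb_borel[measurable]: "(\<lambda>x. x) \<in> (lebesgue :: 'a::euclidean_space measure) \<rightarrow>\<^sub>M borel"
  by (rule measurable_completion) simp

lemma pair_mble0:
  fixes u :: "'a::euclidean_space \<Rightarrow> real" and G :: "real \<Rightarrow> real"
  assumes [measurable]: "u \<in> borel_measurable lebesgue" and Gm[measurable]: "G \<in> borel_measurable borel"
  shows "(\<lambda>p. indicator (ball (fst p) \<delta>) (snd p) * ennreal (G (\<bar>u (fst p) - u (snd p)\<bar> / norm (fst p - snd p) powr s) / norm (fst p - snd p) ^ DIM('a)))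
     \<in> borel_measurable (lebesgue \<Otimes>\<^sub>M lebesgue)"
proof -
  have e: "\<And>a b. indicator (ball a \<delta>) b = (indicator {p::'a\<times>'a. dist (fst p) (snd p) < \<delta>} (a,b) :: ennreal)"
    by (auto simp: indicator_def)
  show ?thesis unfolding e by measurable
qed


lemma transl:
  fixes F :: "'a::euclidean_space \<Rightarrow> ennreal"
  assumes [measurable]: "F \<in> borel_measurable lebesgue"
  shows "(\<integral>\<^sup>+x. F (x + h) \<partial>lebesgue) = (\<integral>\<^sup>+x. F x \<partial>lebesgue)"
proof -
  have T: "(\<lambda>x. h + x) \<in> lebesgue \<rightarrow>\<^sub>M lebesgue"
    using lebesgue_affine_measurable[of "\<lambda>_. 1" h] by (simp add: euclidean_representation)
  have eq: "lebesgue = distr lebesgue lebesgue (\<lambda>x. h + x)"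
    using lebesgue_affine_euclidean[of "\<lambda>_. 1" h] by (simp add: euclidean_representation density_1)
  have "(\<integral>\<^sup>+x. F x \<partial>lebesgue) = (\<integral>\<^sup>+x. F x \<partial>(distr lebesgue lebesgue (\<lambda>x. h + x)))"
    using eq by simp
  also have "\<dots> = (\<integral>\<^sup>+x. F (h + x) \<partial>lebesgue)"
    by (rule nn_integral_distr[OF T]) simp
  finally show ?thesis by (simp add: add.commute)
qed

lemma G_sub:
  fixes G :: "real \<Rightarrow> real"
  assumes conv: "convex_on {0..} G" and dbl: "\<forall>t\<ge>0. G (2*t) \<le> c * G t"
    and a: "a \<ge> 0" and b: "b \<ge> 0"
  shows "G (a + b) \<le> c/2 * (G a + G b)"
proof -
  have "G ((1 - 1/2) *\<^sub>R (2*a) + (1/2) *\<^sub>R (2*b)) \<le> (1 - 1/2) * G (2*a) + (1/2) * G (2*b)"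
    by (rule convex_onD[OF conv]) (use a b in auto)
  moreover have "(1 - 1/2) *\<^sub>R (2*a) + (1/2) *\<^sub>R (2*b) = a + b" by simp
  ultimately have "G (a + b) \<le> 1/2 * G (2*a) + 1/2 * G (2*b)" by simp
  also have "\<dots> \<le> 1/2 * (c * G a) + 1/2 * (c * G b)"
    using dbl a b by (intro add_mono mult_left_mono) auto
  finally show ?thesis by (simp add: algebra_simps)
qed

lemma G_scale:
  fixes G :: "real \<Rightarrow> real"
  assumes conv: "convex_on {0..} G" and G0: "G 0 = 0"
    and l: "0 \<le> l" "l \<le> 1" and t: "t \<ge> 0"
  shows "G (l * t) \<le> l * G t"
proof -
  have "G ((1 - l) *\<^sub>R 0 + l *\<^sub>R t) \<le> (1 - l) * G 0 + l * G t"
    by (rule convex_onD[OF conv]) (use l t in auto)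
  then show ?thesis using G0 by simp
qed

lemma G_pt:
  fixes G :: "real \<Rightarrow> real" and u :: "'a::euclidean_space \<Rightarrow> real"
  assumes conv: "convex_on {0..} G" and G0: "G 0 = 0" and Gnn: "\<forall>t\<ge>0. G t \<ge> 0"
    and s: "0 \<le> s" and d0: "0 < norm (p - z)" and dh: "norm (p - z) < nh" and h1: "nh \<le> 1"
  shows "G \<bar>u p - u z\<bar> \<le> nh powr s * nh ^ DIM('a) * (G (\<bar>u p - u z\<bar> / norm (p - z) powr s) / norm (p - z) ^ DIM('a))"
proof -
  define d where "d = norm (p - z)"
  define q where "q = \<bar>u p - u z\<bar> / d powr s"
  have dpos: "d > 0" using d0 d_def by simp
  have q0: "q \<ge> 0" unfolding q_def by simp
  have Gq: "G q \<ge> 0" using Gnn q0 by simp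
  have a: "\<bar>u p - u z\<bar> = d powr s * q" unfolding q_def using dpos by simp
  have ds1: "d powr s \<le> 1" using dpos dh h1 s d_def by (intro powr_le1) auto
  have "G \<bar>u p - u z\<bar> \<le> d powr s * G q"
    unfolding a by (rule G_scale[OF conv G0]) (use ds1 q0 in auto)
  also have "\<dots> \<le> nh powr s * G q"
    using Gq dpos dh d_def s by (intro mult_right_mono powr_mono2) auto
  also have "\<dots> \<le> nh powr s * (nh ^ DIM('a) * (G q / d ^ DIM('a)))"
  proof -
    have "d ^ DIM('a) \<le> nh ^ DIM('a)" using dpos dh d_def by (intro power_mono) auto
    then have "G q \<le> nh ^ DIM('a) * (G q / d ^ DIM('a))"
      using Gq dpos by (simp add: field_simps mult_left_mono)
    then show ?thesis by (intro mult_left_mono) auto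
  qed
  finally show ?thesis by (simp add: q_def d_def mult.assoc)
qed


lemma pair_mble:
  fixes u :: "'a::euclidean_space \<Rightarrow> real" and G :: "real \<Rightarrow> real"
  assumes um: "u \<in> borel_measurable lebesgue" and mono: "mono_on {0..} G"
  shows "(\<lambda>p. indicator (ball (fst p) \<delta>) (snd p) * ennreal (G (\<bar>u (fst p) - u (snd p)\<bar> / norm (fst p - snd p) powr s) / norm (fst p - snd p) ^ DIM('a)))
     \<in> borel_measurable (lebesgue \<Otimes>\<^sub>M lebesgue)"
proof -
  have "mono (\<lambda>t. G (max 0 t))"
    by (auto intro!: monoI mono_onD[OF mono])
  then have Gm: "(\<lambda>t. G (max 0 t)) \<in> borel_measurable borel"
    by (rule borel_measurable_mono)
  have "\<And>t. t \<ge> 0 \<Longrightarrow> G t = G (max 0 t)" by simp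
  then have e: "\<And>a b. G (\<bar>u a - u b\<bar> / norm (a - b) powr s) = G (max 0 (\<bar>u a - u b\<bar> / norm (a - b) powr s))"
    by simp
  show ?thesis
    unfolding e by (rule pair_mble0[OF um Gm])
qed

lemma sec_mble:
  fixes u :: "'a::euclidean_space \<Rightarrow> real" and G :: "real \<Rightarrow> real"
  assumes um: "u \<in> borel_measurable lebesgue" and mono: "mono_on {0..} G"
  shows "(\<lambda>y. indicator (ball p \<delta>) y * ennreal (G (\<bar>u p - u y\<bar> / norm (p - y) powr s) / norm (p - y) ^ DIM('a)))
     \<in> borel_measurable lebesgue"
  using measurable_compose_Pair1[OF _ pair_mble[OF um mono, of \<delta> s], of p] by simp

lemma F_mble:
  fixes u :: "'a::euclidean_space \<Rightarrow> real" and G :: "real \<Rightarrow> real"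
  assumes um: "u \<in> borel_measurable lebesgue" and mono: "mono_on {0..} G"
  shows "(\<lambda>x. \<integral>\<^sup>+y. indicator (ball x \<delta>) y * ennreal (G (\<bar>u x - u y\<bar> / norm (x - y) powr s) / norm (x - y) ^ DIM('a)) \<partial>lebesgue)
     \<in> borel_measurable lebesgue"
  using sigma_finite_measure.borel_measurable_nn_integral_fst[OF sf_lebesgue pair_mble[OF um mono, of \<delta> s]]
  by simp


lemma pw:
  fixes G :: "real \<Rightarrow> real" and u :: "'a::euclidean_space \<Rightarrow> real" and h x :: 'a
  assumes conv: "convex_on {0..} G" and G0: "G 0 = 0" and Gnn: "\<forall>t\<ge>0. G t \<ge> 0"
    and mono: "mono_on {0..} G" and dbl: "\<forall>t\<ge>0. G (2*t) \<le> c * G t" and c: "c > 0"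
    and s: "0 \<le> s" and h0: "0 < norm h" and hd: "norm h < \<delta>" and h1: "norm h \<le> 1"
    and um: "u \<in> borel_measurable lebesgue"
  defines "f \<equiv> \<lambda>p y. indicator (ball p \<delta>) y * ennreal (G (\<bar>u p - u y\<bar> / norm (p - y) powr s) / norm (p - y) ^ DIM('a))"
  shows "ennreal (G \<bar>u (x+h) - u x\<bar>)
    \<le> ennreal (c * 2 ^ DIM('a) / (2 * unit_ball_vol DIM('a)) * norm h powr s)
       * ((\<integral>\<^sup>+y. f (x+h) y \<partial>lebesgue) + (\<integral>\<^sup>+y. f x y \<partial>lebesgue))"
proof -
  define N where "N = DIM('a)"
  define nh where "nh = norm h"
  define m where "m = x + (1/2) *\<^sub>R h"
  define W where "W = ball m (nh / 2)"
  define K where "K = c / 2 * (nh powr s * nh ^ N)"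
  define D where "D = G \<bar>u (x+h) - u x\<bar>"
  have K0: "K \<ge> 0" unfolding K_def nh_def using c by simp
  have D0: "D \<ge> 0" unfolding D_def using Gnn by simp
  have fm: "\<And>p. f p \<in> borel_measurable lebesgue"
    unfolding f_def using sec_mble[OF um mono] by simp
  have near: "0 < norm (p - z) \<and> norm (p - z) < nh" if "z \<in> W" "p = x + h \<or> p = x" for p z
  proof -
    have dz: "norm (m - z) < nh / 2" using that(1) by (simp add: W_def dist_norm)
    have hh: "norm ((1/2) *\<^sub>R h) = nh / 2" by (simp add: nh_def)
    have hh2: "h = (1/2) *\<^sub>R h + (1/2) *\<^sub>R h" by (simp add: scaleR_add_left[symmetric])
    have "p - z = (m - z) + (1/2) *\<^sub>R h \<or> p - z = (m - z) - (1/2) *\<^sub>R h"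
      using that(2) hh2 by (auto simp: m_def algebra_simps)
    then have le: "norm (p - z) < nh"
    proof
      assume a: "p - z = (m - z) + (1/2) *\<^sub>R h"
      have "norm (p - z) \<le> norm (m - z) + norm ((1/2) *\<^sub>R h)" unfolding a by (rule norm_triangle_ineq)
      then show ?thesis using dz hh by linarith
    next
      assume a: "p - z = (m - z) - (1/2) *\<^sub>R h"
      have "norm (p - z) \<le> norm (m - z) + norm ((1/2) *\<^sub>R h)" unfolding a by (rule norm_triangle_ineq4)
      then show ?thesis using dz hh by linarith
    qed
    have "p \<noteq> z"
    proof
      assume "p = z"
      then have "norm (m - p) < nh / 2" using dz by simp
      moreover have "m - p = (1/2) *\<^sub>R h \<or> m - p = - ((1/2) *\<^sub>R h)"
        using that(2) hh2 by (auto simp: m_def algebra_simps)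
      ultimately show False using hh by auto
    qed
    then show ?thesis using le by simp
  qed
  have bnd: "G \<bar>u p - u z\<bar> \<le> nh powr s * nh ^ N * (G (\<bar>u p - u z\<bar> / norm (p - z) powr s) / norm (p - z) ^ N)"
    and ind: "indicator (ball p \<delta>) z = (1::ennreal)"
    if "z \<in> W" "p = x + h \<or> p = x" for p z
  proof -
    show "G \<bar>u p - u z\<bar> \<le> nh powr s * nh ^ N * (G (\<bar>u p - u z\<bar> / norm (p - z) powr s) / norm (p - z) ^ N)"
      unfolding N_def using near[OF that] h1 nh_def by (intro G_pt[OF conv G0 Gnn s]) auto
    show "indicator (ball p \<delta>) z = (1::ennreal)"
      using near[OF that] hd nh_def by (simp add: dist_norm)
  qed
  have ptw: "indicator W z * ennreal D \<le> ennreal K * (f (x+h) z + f x z)" for z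
  proof (cases "z \<in> W")
    case False then show ?thesis by simp
  next
    case True
    define A where "A = G (\<bar>u (x+h) - u z\<bar> / norm (x + h - z) powr s) / norm (x + h - z) ^ N"
    define B where "B = G (\<bar>u x - u z\<bar> / norm (x - z) powr s) / norm (x - z) ^ N"
    have A0: "A \<ge> 0" unfolding A_def using Gnn by simp
    have B0: "B \<ge> 0" unfolding B_def using Gnn by simp
    have "\<bar>u (x+h) - u x\<bar> \<le> \<bar>u (x+h) - u z\<bar> + \<bar>u x - u z\<bar>" by simp
    then have "D \<le> G (\<bar>u (x+h) - u z\<bar> + \<bar>u x - u z\<bar>)"
      unfolding D_def by (intro mono_onD[OF mono]) auto
    also have "\<dots> \<le> c/2 * (G \<bar>u (x+h) - u z\<bar> + G \<bar>u x - u z\<bar>)"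
      by (rule G_sub[OF conv dbl]) auto
    also have "\<dots> \<le> c/2 * (nh powr s * nh ^ N * A + nh powr s * nh ^ N * B)"
      unfolding A_def B_def using c bnd[OF True] by (intro mult_left_mono add_mono) auto
    also have "\<dots> = K * (A + B)" by (simp add: K_def algebra_simps)
    finally have "D \<le> K * (A + B)" .
    then have "ennreal D \<le> ennreal K * (ennreal A + ennreal B)"
    proof -
      have "ennreal D \<le> ennreal (K * (A + B))" by (rule ennreal_leI) fact
      also have "\<dots> = ennreal K * (ennreal A + ennreal B)"
        using A0 B0 K0 by (simp add: ennreal_mult ennreal_plus)
      finally show ?thesis .
    qed
    moreover have "f (x+h) z = ennreal A" "f x z = ennreal B"
      unfolding f_def A_def B_def N_def using ind[OF True] by auto
    ultimately show ?thesis using True by simp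
  qed
  have Wm: "W \<in> sets lebesgue" unfolding W_def by simp
  have eW: "emeasure lebesgue W = ennreal (unit_ball_vol N * (nh/2) ^ N)"
    unfolding W_def N_def using h0 nh_def by (simp add: emeasure_completion emeasure_ball)
  define e where "e = unit_ball_vol N * (nh/2) ^ N"
  have e0: "e > 0" unfolding e_def using h0 nh_def by simp
  have "ennreal D * ennreal e = (\<integral>\<^sup>+z. ennreal D * indicator W z \<partial>lebesgue)"
    using eW Wm by (simp add: nn_integral_cmult_indicator e_def)
  also have "\<dots> \<le> (\<integral>\<^sup>+z. ennreal K * (f (x+h) z + f x z) \<partial>lebesgue)"
    using ptw by (intro nn_integral_mono) (simp add: mult.commute)
  also have "\<dots> = ennreal K * ((\<integral>\<^sup>+y. f (x+h) y \<partial>lebesgue) + (\<integral>\<^sup>+y. f x y \<partial>lebesgue))"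
    using fm by (simp add: nn_integral_cmult nn_integral_add)
  finally have main: "ennreal D * ennreal e \<le> ennreal K * ((\<integral>\<^sup>+y. f (x+h) y \<partial>lebesgue) + (\<integral>\<^sup>+y. f x y \<partial>lebesgue))" .
  have "ennreal D = ennreal D * ennreal e * ennreal (1/e)"
    using e0 by (simp add: ennreal_mult[symmetric] mult.assoc)
  also have "\<dots> \<le> ennreal K * ((\<integral>\<^sup>+y. f (x+h) y \<partial>lebesgue) + (\<integral>\<^sup>+y. f x y \<partial>lebesgue)) * ennreal (1/e)"
    by (rule mult_right_mono[OF main]) simp
  also have "\<dots> = ennreal (K / e) * ((\<integral>\<^sup>+y. f (x+h) y \<partial>lebesgue) + (\<integral>\<^sup>+y. f x y \<partial>lebesgue))"
    using K0 e0 by (simp add: ennreal_mult mult_ac divide_inverse)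
  also have "K / e = c * 2 ^ DIM('a) / (2 * unit_ball_vol DIM('a)) * norm h powr s"
    using h0 unfolding K_def e_def N_def nh_def by (simp add: field_simps power_divide)
  finally show ?thesis unfolding D_def .
qed


theorem lemma2p12:
  fixes G :: "real \<Rightarrow> real" and s \<delta> :: real
  assumes "\<delta> > 0" and "0 < s" and "s < 1" and "orlicz G"
  shows "\<exists>C>0. \<forall>(u :: 'a::euclidean_space \<Rightarrow> real) \<in> W_sGdelta s G \<delta>. \<forall>h :: 'a.
           0 < norm h \<and> norm h < min (1/2) \<delta> \<longrightarrow>
           (\<integral>\<^sup>+ x. ennreal (G \<bar>u (x + h) - u x\<bar>) \<partial>lebesgue)
             \<le> ennreal (C * norm h powr s) * Psi s G \<delta> u"
proof -
  have Gnn: "\<forall>t\<ge>0. G t \<ge> 0" and conv: "convex_on {0..} G" and mono: "mono_on {0..} G"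
    and G0: "G 0 = 0"
    using assms(4) unfolding orlicz_def by auto
  obtain c where c: "c > 2" and dbl: "\<forall>t\<ge>0. G (2*t) \<le> c * G t"
    using assms(4) unfolding orlicz_def by auto
  define V where "V = unit_ball_vol (real DIM('a))"
  have V0: "V > 0" unfolding V_def by simp
  define C where "C = c * 2 ^ DIM('a) / V"
  have C0: "C > 0" unfolding C_def using c V0 by simp
  show ?thesis
  proof (intro exI[of _ C] conjI ballI allI impI)
    show "C > 0" by (rule C0)
    fix u :: "'a \<Rightarrow> real" and h :: 'a
    assume u: "u \<in> W_sGdelta s G \<delta>" and hh: "0 < norm h \<and> norm h < min (1/2) \<delta>"
    have um: "u \<in> borel_measurable lebesgue" using u unfolding W_sGdelta_def LG_def by auto
    define F where "F = (\<lambda>x. \<integral>\<^sup>+y. indicator (ball x \<delta>) y * ennreal (G (\<bar>u x - u y\<bar> / norm (x - y) powr s) / norm (x - y) ^ DIM('a)) \<partial>lebesgue)"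
    have Fm: "F \<in> borel_measurable lebesgue" unfolding F_def by (rule F_mble[OF um mono])
    have T: "(\<lambda>x. x + h) \<in> lebesgue \<rightarrow>\<^sub>M lebesgue"
      using lebesgue_affine_measurable[of "\<lambda>_. 1" h] by (simp add: euclidean_representation add.commute)
    have Fhm: "(\<lambda>x. F (x + h)) \<in> borel_measurable lebesgue"
      using measurable_comp[OF T Fm] by (simp add: comp_def)
    have Psi: "Psi s G \<delta> u = (\<integral>\<^sup>+x. F x \<partial>lebesgue)" by (simp add: Psi_def F_def)
    define k where "k = c * 2 ^ DIM('a) / (2 * V) * norm h powr s"
    have k0: "k \<ge> 0" unfolding k_def using c V0 by simp
    have "(\<integral>\<^sup>+ x. ennreal (G \<bar>u (x + h) - u x\<bar>) \<partial>lebesgue) \<le> (\<integral>\<^sup>+ x. ennreal k * (F (x + h) + F x) \<partial>lebesgue)"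
    proof (rule nn_integral_mono)
      fix x
      show "ennreal (G \<bar>u (x + h) - u x\<bar>) \<le> ennreal k * (F (x + h) + F x)"
        using pw[OF conv G0 Gnn mono dbl _ _ _ _ _ um, where \<delta>=\<delta> and s=s and h=h and x=x] c assms(2) hh
        by (simp add: F_def k_def V_def)
    qed
    also have "\<dots> = ennreal k * ((\<integral>\<^sup>+ x. F (x + h) \<partial>lebesgue) + (\<integral>\<^sup>+ x. F x \<partial>lebesgue))"
      using Fm Fhm by (simp add: nn_integral_cmult nn_integral_add)
    also have "\<dots> = ennreal k * (Psi s G \<delta> u + Psi s G \<delta> u)"
      using transl[OF Fm, of h] Psi by simp
    also have "\<dots> = ennreal (C * norm h powr s) * Psi s G \<delta> u"
    proof -
      have "ennreal k * (Psi s G \<delta> u + Psi s G \<delta> u) = ennreal k * (ennreal 2 * Psi s G \<delta> u)"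
        by (simp add: mult_2[symmetric])
      also have "\<dots> = ennreal (k * 2) * Psi s G \<delta> u"
        using k0 by (simp add: ennreal_mult mult.assoc)
      also have "k * 2 = C * norm h powr s" unfolding k_def C_def using V0 by simp
      finally show ?thesis .
    qed
    finally show "(\<integral>\<^sup>+ x. ennreal (G \<bar>u (x + h) - u x\<bar>) \<partial>lebesgue) \<le> ennreal (C * norm h powr s) * Psi s G \<delta> u" .
  qed
qed

end
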